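(* Let $G_1$ be a group whose centre $Z(G_1)$ has index $k$ in $G_1$ (with $k$ finite). Let $n,m\ge0$, let $G\le G_1^n$ be a subgroup, let $w(\bar x,\bar y)$ be a group word in the variables $\bar x=(x_1,\dots,x_n)$, $\bar y=(y_1,\dots,y_m)$ and their inverses, and let $\bar g\in G_1^m$, $c\in G_1$. If the set $\{\bar h\in G:w(\bar h,\bar g)=c\}$ is $2k^n$-large in $G$, then $w(\bar h,\bar g)=c$ for all $\bar h\in G$.
   Context: A subset $X\subseteq G$ is $k$-large in $G$ if the intersection of any $k$ left translates $\bar a_1X\cap\dots\cap\bar a_kX$ ($\bar a_i\in G$) is non-empty. *)

theory Defs
  imports "HOL-Algebra.Coset"
begin

definition center :: "('a, 'b) monoid_scheme \<Rightarrow> 'a set" where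
  "center G = {z \<in> carrier G. \<forall>x \<in> carrier G. z \<otimes>\<^bsub>G\<^esub> x = x \<otimes>\<^bsub>G\<^esub> z}"

definition power_group :: "('a, 'b) monoid_scheme \<Rightarrow> nat \<Rightarrow> 'a list monoid" where
  "power_group G1 n = \<lparr> carrier = {h. length h = n \<and> set h \<subseteq> carrier G1},
     mult = (\<lambda>a b. map2 (\<lambda>x y. x \<otimes>\<^bsub>G1\<^esub> y) a b),
     one = replicate n \<one>\<^bsub>G1\<^esub> \<rparr>"

definition large :: "('a, 'b) monoid_scheme \<Rightarrow> nat \<Rightarrow> 'a set \<Rightarrow> bool" where
  "large G k X \<longleftrightarrow> (\<forall>a. (\<forall>i<k. a i \<in> carrier G) \<longrightarrow> (\<Inter>i<k. a i <#\<^bsub>G\<^esub> X) \<noteq> {})"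

text \<open>Group words in variables x_i (Inl i) and y_j (Inr j); the boolean flag True
  means the letter itself, False its inverse.\<close>
type_synonym word = "((nat + nat) \<times> bool) list"

definition word_vars_ok :: "nat \<Rightarrow> nat \<Rightarrow> word \<Rightarrow> bool" where
  "word_vars_ok n m w \<longleftrightarrow> (\<forall>(v, b) \<in> set w. case v of Inl i \<Rightarrow> i < n | Inr j \<Rightarrow> j < m)"

definition eval_word :: "('a, 'b) monoid_scheme \<Rightarrow> word \<Rightarrow> 'a list \<Rightarrow> 'a list \<Rightarrow> 'a" where
  "eval_word G w h g = foldr (\<lambda>(v, b) acc.
      (let e = (case v of Inl i \<Rightarrow> h ! i | Inr j \<Rightarrow> g ! j)
       in if b then e else inv\<^bsub>G\<^esub> e) \<otimes>\<^bsub>G\<^esub> acc) w \<one>\<^bsub>G\<^esub>"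

end

theory Submission
  imports Defs
begin

lemma pg_carrier: "carrier (power_group G1 n) = {h. length h = n \<and> set h \<subseteq> carrier G1}"
  by (simp add: power_group_def)

lemma pg_mult: "x \<otimes>\<^bsub>power_group G1 n\<^esub> y = map2 (\<lambda>a b. a \<otimes>\<^bsub>G1\<^esub> b) x y"
  by (simp add: power_group_def)

lemma pg_one: "\<one>\<^bsub>power_group G1 n\<^esub> = replicate n \<one>\<^bsub>G1\<^esub>"
  by (simp add: power_group_def)

lemma pg_nth: "length x = n \<Longrightarrow> length y = n \<Longrightarrow> i < n \<Longrightarrow>
   (x \<otimes>\<^bsub>power_group G1 n\<^esub> y) ! i = x ! i \<otimes>\<^bsub>G1\<^esub> y ! i"
  by (simp add: pg_mult)

lemma nth_carr[simp]: "set h \<subseteq> A \<Longrightarrow> i < length h \<Longrightarrow> h ! i \<in> A"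
  using nth_mem by blast

lemma pg_group: assumes "group G1" shows "group (power_group G1 n)"
proof -
  interpret G1: group G1 by fact
  show ?thesis
  proof (rule groupI)
    fix x y assume "x \<in> carrier (power_group G1 n)" "y \<in> carrier (power_group G1 n)"
    then show "x \<otimes>\<^bsub>power_group G1 n\<^esub> y \<in> carrier (power_group G1 n)"
      by (auto simp: pg_carrier pg_mult set_zip intro!: G1.m_closed)
  next
    show "\<one>\<^bsub>power_group G1 n\<^esub> \<in> carrier (power_group G1 n)"
      by (auto simp: pg_carrier pg_one)
  next
    fix x y z assume A: "x \<in> carrier (power_group G1 n)" "y \<in> carrier (power_group G1 n)"
      "z \<in> carrier (power_group G1 n)"
    show "x \<otimes>\<^bsub>power_group G1 n\<^esub> y \<otimes>\<^bsub>power_group G1 n\<^esub> z =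
          x \<otimes>\<^bsub>power_group G1 n\<^esub> (y \<otimes>\<^bsub>power_group G1 n\<^esub> z)"
      using A by (intro nth_equalityI) (auto simp: pg_carrier pg_mult G1.m_assoc)
  next
    fix x assume A: "x \<in> carrier (power_group G1 n)"
    show "\<one>\<^bsub>power_group G1 n\<^esub> \<otimes>\<^bsub>power_group G1 n\<^esub> x = x"
      using A by (intro nth_equalityI) (auto simp: pg_carrier pg_mult pg_one)
  next
    fix x assume A: "x \<in> carrier (power_group G1 n)"
    show "\<exists>y\<in>carrier (power_group G1 n). y \<otimes>\<^bsub>power_group G1 n\<^esub> x = \<one>\<^bsub>power_group G1 n\<^esub>"
    proof (intro bexI)
      show "map (\<lambda>a. inv\<^bsub>G1\<^esub> a) x \<in> carrier (power_group G1 n)"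
        using A by (auto simp: pg_carrier)
      show "map (\<lambda>a. inv\<^bsub>G1\<^esub> a) x \<otimes>\<^bsub>power_group G1 n\<^esub> x = \<one>\<^bsub>power_group G1 n\<^esub>"
        using A by (intro nth_equalityI) (auto simp: pg_carrier pg_mult pg_one)
    qed
  qed
qed

lemma pg_inv: assumes "group G1" "x \<in> carrier (power_group G1 n)"
  shows "inv\<^bsub>power_group G1 n\<^esub> x = map (\<lambda>a. inv\<^bsub>G1\<^esub> a) x"
proof -
  interpret G1: group G1 by fact
  interpret P: group "power_group G1 n" using pg_group[OF assms(1)] .
  show ?thesis
  proof (rule P.inv_equality)
    show "map (\<lambda>a. inv\<^bsub>G1\<^esub> a) x \<in> carrier (power_group G1 n)"
      using assms(2) by (auto simp: pg_carrier)
    show "map (\<lambda>a. inv\<^bsub>G1\<^esub> a) x \<otimes>\<^bsub>power_group G1 n\<^esub> x = \<one>\<^bsub>power_group G1 n\<^esub>"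
      using assms(2) by (intro nth_equalityI) (auto simp: pg_carrier pg_mult pg_one)
  qed (rule assms(2))
qed

lemma center_sub: "center G \<subseteq> carrier G" by (auto simp: center_def)

lemma center_comm: "z \<in> center G \<Longrightarrow> x \<in> carrier G \<Longrightarrow> z \<otimes>\<^bsub>G\<^esub> x = x \<otimes>\<^bsub>G\<^esub> z"
  by (auto simp: center_def)

lemma center_one: "group G \<Longrightarrow> \<one>\<^bsub>G\<^esub> \<in> center G"
  by (auto simp: center_def group.is_monoid)

lemma center_mult: fixes G (structure) assumes "group G" "a \<in> center G" "b \<in> center G"
  shows "a \<otimes> b \<in> center G"
proof -
  interpret group G by fact
  have a: "a \<in> carrier G" and b: "b \<in> carrier G" using assms center_sub[of G] by auto
  show ?thesis unfolding center_def
  proof (intro CollectI conjI ballI)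
    show "a \<otimes> b \<in> carrier G" using a b by simp
    fix x assume x: "x \<in> carrier G"
    have "a \<otimes> b \<otimes> x = a \<otimes> (x \<otimes> b)" using a b x assms center_comm[of b G x] by (simp add: m_assoc)
    also have "\<dots> = (a \<otimes> x) \<otimes> b" using a b x by (simp add: m_assoc)
    also have "\<dots> = x \<otimes> (a \<otimes> b)" using a b x assms center_comm[of a G x] by (simp add: m_assoc)
    finally show "a \<otimes> b \<otimes> x = x \<otimes> (a \<otimes> b)" .
  qed
qed

lemma center_inv: fixes G (structure) assumes "group G" "a \<in> center G"
  shows "inv a \<in> center G"
proof -
  interpret group G by fact
  have a: "a \<in> carrier G" using assms center_sub[of G] by auto
  show ?thesis unfolding center_def
  proof (intro CollectI conjI ballI)
    show "inv a \<in> carrier G" using a by simp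
    fix x assume x: "x \<in> carrier G"
    have "inv a \<otimes> x = inv (inv x \<otimes> a)" using a x by (simp add: inv_mult_group)
    also have "inv x \<otimes> a = a \<otimes> inv x" using assms center_comm[of a G "inv x"] x by simp
    also have "inv (a \<otimes> inv x) = x \<otimes> inv a" using a x by (simp add: inv_mult_group)
    finally show "inv a \<otimes> x = x \<otimes> inv a" .
  qed
qed

definition letter :: "('a, 'b) monoid_scheme \<Rightarrow> nat + nat \<Rightarrow> bool \<Rightarrow> 'a list \<Rightarrow> 'a list \<Rightarrow> 'a" where
  "letter G v b h g = (let e = (case v of Inl i \<Rightarrow> h ! i | Inr j \<Rightarrow> g ! j)
       in if b then e else inv\<^bsub>G\<^esub> e)"

lemma eval_Nil: "eval_word G [] h g = \<one>\<^bsub>G\<^esub>" by (simp add: eval_word_def)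

lemma eval_Cons: "eval_word G ((v, b) # w) h g = letter G v b h g \<otimes>\<^bsub>G\<^esub> eval_word G w h g"
  by (simp add: eval_word_def letter_def)

lemma ok_Cons: "word_vars_ok n m ((v, b) # w) \<longleftrightarrow>
   (case v of Inl i \<Rightarrow> i < n | Inr j \<Rightarrow> j < m) \<and> word_vars_ok n m w"
  by (simp add: word_vars_ok_def)

lemma eval_closed:
  assumes "group G1" "word_vars_ok n m w" "length h = n" "set h \<subseteq> carrier G1"
    "length g = m" "set g \<subseteq> carrier G1"
  shows "eval_word G1 w h g \<in> carrier G1"
  using assms(2)
proof (induction w)
  case Nil then show ?case using assms(1) by (simp add: eval_Nil group.is_monoid)
next
  case (Cons a w)
  obtain v b where ab: "a = (v, b)" by (cases a)
  have "letter G1 v b h g \<in> carrier G1"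
    using Cons.prems assms unfolding ab ok_Cons letter_def
    by (auto split: sum.splits simp: Let_def group.inv_closed)
  then show ?case using Cons assms(1) unfolding ab eval_Cons ok_Cons
    by (simp add: group.is_monoid monoid.m_closed)
qed

lemma eval_center:
  assumes "group G1" "word_vars_ok n m w" "length z = n" "set z \<subseteq> center G1"
  shows "eval_word G1 w z (replicate m \<one>\<^bsub>G1\<^esub>) \<in> center G1"
  using assms(2)
proof (induction w)
  case Nil then show ?case using assms(1) by (simp add: eval_Nil center_one)
next
  case (Cons a w)
  obtain v b where ab: "a = (v, b)" by (cases a)
  have "letter G1 v b z (replicate m \<one>\<^bsub>G1\<^esub>) \<in> center G1"
    using Cons.prems assms unfolding ab ok_Cons letter_def
    by (auto split: sum.splits simp: Let_def center_inv center_one)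
  then show ?case using Cons assms(1) unfolding ab eval_Cons ok_Cons
    by (simp add: center_mult)
qed

lemma letter_shift:
  fixes G1 (structure)
  assumes "group G1" "case v of Inl i \<Rightarrow> i < n | Inr j \<Rightarrow> j < m"
    "length h = n" "set h \<subseteq> carrier G1" "length z = n" "set z \<subseteq> center G1"
    "length g = m" "set g \<subseteq> carrier G1"
  shows "letter G1 v b (map2 (\<lambda>a b. a \<otimes> b) h z) g =
    letter G1 v b h g \<otimes> letter G1 v b z (replicate m \<one>)"
proof -
  interpret group G1 by fact
  have zc: "set z \<subseteq> carrier G1" using assms(6) center_sub[of G1] by auto
  show ?thesis
  proof (cases v)
    case (Inl i)
    then have i: "i < n" using assms(2) by simp
    have hi: "h ! i \<in> carrier G1" and zi: "z ! i \<in> carrier G1" and zic: "z ! i \<in> center G1"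
      using i assms zc by auto
    have e: "map2 (\<lambda>a b. a \<otimes> b) h z ! i = h ! i \<otimes> z ! i" using i assms by simp
    have "inv (h ! i \<otimes> z ! i) = inv (h ! i) \<otimes> inv (z ! i)"
    proof -
      have "inv (h ! i \<otimes> z ! i) = inv (z ! i) \<otimes> inv (h ! i)" using hi zi by (simp add: inv_mult_group)
      also have "\<dots> = inv (h ! i) \<otimes> inv (z ! i)"
        using center_comm[OF center_inv[OF assms(1) zic], of "inv (h ! i)"] hi by simp
      finally show ?thesis .
    qed
    then show ?thesis using Inl e by (simp add: letter_def Let_def)
  next
    case (Inr j)
    then have j: "j < m" using assms(2) by simp
    have "g ! j \<in> carrier G1" using j assms by auto
    then show ?thesis using Inr j by (simp add: letter_def Let_def)
  qed
qed

lemma eval_shift: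
  fixes G1 (structure)
  assumes "group G1" "word_vars_ok n m w"
    "length h = n" "set h \<subseteq> carrier G1" "length z = n" "set z \<subseteq> center G1"
    "length g = m" "set g \<subseteq> carrier G1"
  shows "eval_word G1 w (map2 (\<lambda>a b. a \<otimes> b) h z) g =
    eval_word G1 w h g \<otimes> eval_word G1 w z (replicate m \<one>)"
  using assms(2)
proof (induction w)
  case Nil then show ?case using assms(1) by (simp add: eval_Nil group.is_monoid)
next
  case (Cons a w)
  interpret group G1 by fact
  obtain v b where ab: "a = (v, b)" by (cases a)
  have okv: "case v of Inl i \<Rightarrow> i < n | Inr j \<Rightarrow> j < m" and okw: "word_vars_ok n m w"
    using Cons.prems unfolding ab ok_Cons by auto
  have zc: "set z \<subseteq> carrier G1" using assms(6) center_sub[of G1] by auto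
  define L where "L = letter G1 v b h g"
  define C where "C = letter G1 v b z (replicate m \<one>)"
  define E where "E = eval_word G1 w h g"
  define F where "F = eval_word G1 w z (replicate m \<one>)"
  have L: "L \<in> carrier G1" unfolding L_def using okv assms unfolding letter_def
    by (auto split: sum.splits simp: Let_def)
  have C: "C \<in> center G1" unfolding C_def using okv assms unfolding letter_def
    by (auto split: sum.splits simp: Let_def center_inv center_one)
  have Cc: "C \<in> carrier G1" using C center_sub[of G1] by auto
  have E: "E \<in> carrier G1" unfolding E_def using eval_closed[OF assms(1) okw assms(3,4,7,8)] .
  have F: "F \<in> carrier G1" unfolding F_def using eval_center[OF assms(1) okw assms(5,6)] center_sub[of G1] by auto
  have "eval_word G1 ((v, b) # w) (map2 (\<lambda>a b. a \<otimes> b) h z) g = (L \<otimes> C) \<otimes> (E \<otimes> F)"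
    unfolding eval_Cons L_def C_def E_def F_def
    using letter_shift[OF assms(1) okv assms(3-8)] Cons.IH[OF okw] by simp
  also have "\<dots> = L \<otimes> ((C \<otimes> E) \<otimes> F)" using L Cc E F by (simp add: m_assoc)
  also have "C \<otimes> E = E \<otimes> C" using center_comm[OF C E] .
  also have "L \<otimes> ((E \<otimes> C) \<otimes> F) = (L \<otimes> E) \<otimes> (C \<otimes> F)" using L Cc E F by (simp add: m_assoc)
  finally show ?case unfolding ab eval_Cons L_def C_def E_def F_def .
qed

lemma pg_central:
  assumes "group G1" "u \<in> carrier (power_group G1 n)" "set u \<subseteq> center G1"
    "y \<in> carrier (power_group G1 n)"
  shows "u \<otimes>\<^bsub>power_group G1 n\<^esub> y = y \<otimes>\<^bsub>power_group G1 n\<^esub> u"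
  using assms by (intro nth_equalityI) (auto simp: pg_carrier pg_mult intro!: center_comm)

lemma grp_alg1:
  assumes "group P" "t \<in> carrier P" "h0 \<in> carrier P" "x \<in> carrier P"
    "h = (t \<otimes>\<^bsub>P\<^esub> inv\<^bsub>P\<^esub> h0) \<otimes>\<^bsub>P\<^esub> x"
  shows "x = h0 \<otimes>\<^bsub>P\<^esub> (inv\<^bsub>P\<^esub> t \<otimes>\<^bsub>P\<^esub> h)"
proof -
  interpret group P by fact
  show ?thesis using assms(2-5) by (simp add: m_assoc[symmetric])
qed

lemma grp_alg2:
  assumes "group P" "t \<in> carrier P" "h0 \<in> carrier P" "x \<in> carrier P" "u \<in> carrier P"
    "\<And>y. y \<in> carrier P \<Longrightarrow> u \<otimes>\<^bsub>P\<^esub> y = y \<otimes>\<^bsub>P\<^esub> u"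
    "h = (t \<otimes>\<^bsub>P\<^esub> u \<otimes>\<^bsub>P\<^esub> inv\<^bsub>P\<^esub> h0) \<otimes>\<^bsub>P\<^esub> x"
  shows "x \<otimes>\<^bsub>P\<^esub> u = h0 \<otimes>\<^bsub>P\<^esub> (inv\<^bsub>P\<^esub> t \<otimes>\<^bsub>P\<^esub> h)"
proof -
  interpret group P by fact
  have "h0 \<otimes>\<^bsub>P\<^esub> (inv\<^bsub>P\<^esub> t \<otimes>\<^bsub>P\<^esub> h) = h0 \<otimes>\<^bsub>P\<^esub> u \<otimes>\<^bsub>P\<^esub> inv\<^bsub>P\<^esub> h0 \<otimes>\<^bsub>P\<^esub> x"
    using assms(2-5,7) by (simp add: m_assoc[symmetric])
  also have "h0 \<otimes>\<^bsub>P\<^esub> u = u \<otimes>\<^bsub>P\<^esub> h0" using assms(6)[of h0] assms(3) by simp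
  also have "u \<otimes>\<^bsub>P\<^esub> h0 \<otimes>\<^bsub>P\<^esub> inv\<^bsub>P\<^esub> h0 \<otimes>\<^bsub>P\<^esub> x = u \<otimes>\<^bsub>P\<^esub> x"
    using assms(2-5) by (simp add: m_assoc)
  also have "\<dots> = x \<otimes>\<^bsub>P\<^esub> u" using assms(6) assms(4) by simp
  finally show ?thesis by simp
qed

theorem corollary3p6:
  fixes G1 :: "('a, 'b) monoid_scheme" and G :: "'a list set"
    and n m k :: nat and w :: word and g :: "'a list" and c :: 'a
  assumes "group G1"
    and "finite (rcosets\<^bsub>G1\<^esub> (center G1))"
    and "card (rcosets\<^bsub>G1\<^esub> (center G1)) = k"
    and "subgroup G (power_group G1 n)"
    and "word_vars_ok n m w"
    and "length g = m" and "set g \<subseteq> carrier G1"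
    and "c \<in> carrier G1"
    and "large ((power_group G1 n)\<lparr>carrier := G\<rparr>) (2 * k ^ n)
           {h \<in> G. eval_word G1 w h g = c}"
  shows "\<forall>h \<in> G. eval_word G1 w h g = c"
proof (rule ccontr)
  assume "\<not> ?thesis"
  then obtain h0 where h0G: "h0 \<in> G" and h0c: "eval_word G1 w h0 g \<noteq> c" by auto
  define P where "P = power_group G1 n"
  define Z where "Z = center G1"
  define X where "X = {h \<in> G. eval_word G1 w h g = c}"
  interpret G1: group G1 by fact
  interpret P: group P using pg_group[OF assms(1)] P_def by simp
  have sub: "subgroup G P" using assms(4) P_def by simp
  have GP: "G \<subseteq> carrier P" using subgroup.subset[OF sub] .
  have Gm: "\<And>x y. x \<in> G \<Longrightarrow> y \<in> G \<Longrightarrow> x \<otimes>\<^bsub>P\<^esub> y \<in> G" using subgroup.m_closed[OF sub] .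
  have Gi: "\<And>x. x \<in> G \<Longrightarrow> inv\<^bsub>P\<^esub> x \<in> G" using subgroup.m_inv_closed[OF sub] .
  have G1': "\<one>\<^bsub>P\<^esub> \<in> G" using subgroup.one_closed[OF sub] .
  have carrP: "\<And>x. x \<in> carrier P \<longleftrightarrow> length x = n \<and> set x \<subseteq> carrier G1"
    unfolding P_def pg_carrier by simp
  have ZC: "Z \<subseteq> carrier G1" unfolding Z_def by (rule center_sub)
  define f where "f = (\<lambda>h. map (\<lambda>x. Z #>\<^bsub>G1\<^esub> x) h)"
  have fG: "f ` G \<subseteq> {xs. set xs \<subseteq> rcosets\<^bsub>G1\<^esub> Z \<and> length xs = n}"
  proof
    fix xs assume "xs \<in> f ` G"
    then obtain h where h: "h \<in> G" "xs = f h" by auto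
    then have "length h = n" "set h \<subseteq> carrier G1" using GP carrP by auto
    then show "xs \<in> {xs. set xs \<subseteq> rcosets\<^bsub>G1\<^esub> Z \<and> length xs = n}"
      using h unfolding f_def RCOSETS_def by auto
  qed
  define K where "K = k ^ n"
  have finF: "finite (f ` G)"
    using fG finite_lists_length_eq[OF assms(2)[folded Z_def]] finite_subset by blast
  have cardF: "card (f ` G) \<le> K"
    using card_mono[OF finite_lists_length_eq[OF assms(2)[folded Z_def]] fG]
      card_lists_length_eq[OF assms(2)[folded Z_def]] assms(3) unfolding K_def Z_def by simp
  have cardF0: "0 < card (f ` G)" using finF G1' card_gt_0_iff by blast
  obtain enum where enum: "bij_betw enum {0..<card (f ` G)} (f ` G)"
    using ex_bij_betw_nat_finite[OF finF] by blast
  define e where "e = (\<lambda>i. inv_into G f (enum (if i < card (f ` G) then i else 0)))"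
  have eG: "\<And>i. e i \<in> G"
  proof -
    fix i
    have "enum (if i < card (f ` G) then i else 0) \<in> f ` G"
      using enum cardF0 unfolding bij_betw_def by auto
    then show "e i \<in> G" unfolding e_def by (auto intro: inv_into_into)
  qed
  have ecover: "\<And>h. h \<in> G \<Longrightarrow> \<exists>j < card (f ` G). f (e j) = f h"
  proof -
    fix h assume h: "h \<in> G"
    then have "f h \<in> enum ` {0..<card (f ` G)}" using enum unfolding bij_betw_def by auto
    then obtain j where j: "j < card (f ` G)" "enum j = f h" by auto
    then have "f (e j) = f h" unfolding e_def using h by (auto intro: f_inv_into_f)
    then show "\<exists>j < card (f ` G). f (e j) = f h" using j by auto
  qed
  have L4: "\<And>t h. t \<in> carrier P \<Longrightarrow> h \<in> carrier P \<Longrightarrow> f t = f h \<Longrightarrow>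
      set (inv\<^bsub>P\<^esub> t \<otimes>\<^bsub>P\<^esub> h) \<subseteq> Z"
  proof -
    fix t h assume t: "t \<in> carrier P" and h: "h \<in> carrier P" and fe: "f t = f h"
    have lt: "length t = n" and lh: "length h = n" and ct: "set t \<subseteq> carrier G1"
      and ch: "set h \<subseteq> carrier G1" using t h carrP by auto
    have "\<forall>i < n. inv\<^bsub>G1\<^esub> (t ! i) \<otimes>\<^bsub>G1\<^esub> h ! i \<in> Z"
    proof (intro allI impI)
      fix i assume i: "i < n"
      have "Z #>\<^bsub>G1\<^esub> (t ! i) = Z #>\<^bsub>G1\<^esub> (h ! i)"
        using fe i lt lh unfolding f_def by (metis nth_map)
      moreover have "h ! i \<in> Z #>\<^bsub>G1\<^esub> (h ! i)"
        unfolding r_coset_def using center_one[OF assms(1)] i lh ch unfolding Z_def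
        by (auto intro!: bexI[of _ "\<one>\<^bsub>G1\<^esub>"])
      ultimately obtain zz where zz: "zz \<in> Z" "h ! i = zz \<otimes>\<^bsub>G1\<^esub> t ! i"
        unfolding r_coset_def by auto
      have ti: "t ! i \<in> carrier G1" using i lt ct by auto
      have zzc: "zz \<in> carrier G1" using zz ZC by auto
      have "inv\<^bsub>G1\<^esub> (t ! i) \<otimes>\<^bsub>G1\<^esub> h ! i = inv\<^bsub>G1\<^esub> (t ! i) \<otimes>\<^bsub>G1\<^esub> (t ! i \<otimes>\<^bsub>G1\<^esub> zz)"
        using zz center_comm[of zz G1 "t ! i"] ti unfolding Z_def by simp
      also have "\<dots> = zz" using ti zzc by (simp add: G1.m_assoc[symmetric])
      finally show "inv\<^bsub>G1\<^esub> (t ! i) \<otimes>\<^bsub>G1\<^esub> h ! i \<in> Z" using zz by simp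
    qed
    then show "set (inv\<^bsub>P\<^esub> t \<otimes>\<^bsub>P\<^esub> h) \<subseteq> Z"
      using t lt lh unfolding P_def
      by (auto simp: pg_inv[OF assms(1)] pg_mult set_conv_nth)
  qed
  define Q where "Q = (\<lambda>z1. z1 \<in> G \<and> set z1 \<subseteq> Z \<and> eval_word G1 w (h0 \<otimes>\<^bsub>P\<^esub> z1) g = c)"
  define u where "u = (if \<exists>z1. Q z1 then SOME z1. Q z1 else \<one>\<^bsub>P\<^esub>)"
  have uG: "u \<in> G" and uZ: "set u \<subseteq> Z" and uQ: "(\<exists>z1. Q z1) \<Longrightarrow> Q u"
  proof -
    show "(\<exists>z1. Q z1) \<Longrightarrow> Q u" unfolding u_def by (simp add: someI_ex)
    have "set (\<one>\<^bsub>P\<^esub>) \<subseteq> Z" unfolding P_def pg_one Z_def using center_one[OF assms(1)] by auto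
    then show "u \<in> G" "set u \<subseteq> Z" using \<open>(\<exists>z1. Q z1) \<Longrightarrow> Q u\<close> G1' unfolding u_def Q_def
      by (auto split: if_splits)
  qed
  define a where "a = (\<lambda>i. if i < K then e i \<otimes>\<^bsub>P\<^esub> inv\<^bsub>P\<^esub> h0
                           else e (i - K) \<otimes>\<^bsub>P\<^esub> u \<otimes>\<^bsub>P\<^esub> inv\<^bsub>P\<^esub> h0)"
  have aG: "\<And>i. a i \<in> G" unfolding a_def using eG uG h0G Gm Gi by auto
  from assms(9) obtain h where hI: "h \<in> (\<Inter>i<2 * K. a i <#\<^bsub>P\<lparr>carrier := G\<rparr>\<^esub> X)"
    unfolding large_def K_def X_def P_def[symmetric] using aG by fastforce
  have hin: "\<And>i. i < 2 * K \<Longrightarrow> \<exists>x\<in>X. h = a i \<otimes>\<^bsub>P\<^esub> x"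
    using hI unfolding l_coset_def by auto
  have K0: "0 < K" using cardF cardF0 by simp
  obtain x0 where "x0 \<in> X" "h = a 0 \<otimes>\<^bsub>P\<^esub> x0" using hin[of 0] K0 by auto
  then have hG: "h \<in> G" using aG Gm unfolding X_def by auto
  obtain j where j: "j < card (f ` G)" and fj: "f (e j) = f h" using ecover[OF hG] by blast
  define t where "t = e j"
  have tG: "t \<in> G" unfolding t_def by (rule eG)
  define z where "z = inv\<^bsub>P\<^esub> t \<otimes>\<^bsub>P\<^esub> h"
  have zG: "z \<in> G" unfolding z_def using tG hG Gm Gi by auto
  have zZ: "set z \<subseteq> Z" unfolding z_def using L4 tG hG GP fj t_def by auto
  have h0P: "h0 \<in> carrier P" and tP: "t \<in> carrier P" and hP: "h \<in> carrier P"
    and uP: "u \<in> carrier P" using h0G tG hG uG GP by auto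
  have XP: "\<And>x. x \<in> X \<Longrightarrow> x \<in> carrier P" using GP unfolding X_def by auto
  have shift: "\<And>y v. y \<in> carrier P \<Longrightarrow> v \<in> carrier P \<Longrightarrow> set v \<subseteq> Z \<Longrightarrow>
     eval_word G1 w (y \<otimes>\<^bsub>P\<^esub> v) g = eval_word G1 w y g \<otimes>\<^bsub>G1\<^esub> eval_word G1 w v (replicate m \<one>\<^bsub>G1\<^esub>)"
    unfolding P_def pg_mult Z_def
    using eval_shift[OF assms(1) assms(5) _ _ _ _ assms(6) assms(7)] carrP unfolding P_def by auto
  show False
  proof (cases "eval_word G1 w (h0 \<otimes>\<^bsub>P\<^esub> z) g = c")
    case False
    obtain x where x: "x \<in> X" "h = a j \<otimes>\<^bsub>P\<^esub> x" using hin[of j] j cardF by auto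
    have "x = h0 \<otimes>\<^bsub>P\<^esub> z"
      using grp_alg1[OF P.is_group tP h0P XP[OF x(1)]] x(2) j cardF
      unfolding a_def z_def t_def by auto
    then show False using x(1) False unfolding X_def by auto
  next
    case True
    then have "Q z" unfolding Q_def using zG zZ by auto
    then have Qu: "Q u" using uQ by auto
    obtain x where x: "x \<in> X" "h = a (K + j) \<otimes>\<^bsub>P\<^esub> x" using hin[of "K + j"] j cardF by auto
    have cen: "\<And>y. y \<in> carrier P \<Longrightarrow> u \<otimes>\<^bsub>P\<^esub> y = y \<otimes>\<^bsub>P\<^esub> u"
      using pg_central[OF assms(1)] uP uZ unfolding P_def Z_def by auto
    have xu: "x \<otimes>\<^bsub>P\<^esub> u = h0 \<otimes>\<^bsub>P\<^esub> z"
      using grp_alg2[OF P.is_group tP h0P XP[OF x(1)] uP cen] x(2)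
      unfolding a_def z_def t_def by auto
    define F where "F = eval_word G1 w u (replicate m \<one>\<^bsub>G1\<^esub>)"
    have Fc: "F \<in> carrier G1" unfolding F_def
      using eval_center[OF assms(1) assms(5)] uP uZ carrP ZC unfolding Z_def by blast
    have xc: "eval_word G1 w x g \<in> carrier G1"
      using eval_closed[OF assms(1) assms(5)] XP[OF x(1)] carrP assms(6,7) by blast
    have h0e: "eval_word G1 w h0 g \<in> carrier G1"
      using eval_closed[OF assms(1) assms(5)] h0P carrP assms(6,7) by blast
    have "eval_word G1 w x g \<otimes>\<^bsub>G1\<^esub> F = c"
      using shift[OF XP[OF x(1)] uP uZ] xu True unfolding F_def by simp
    moreover have "eval_word G1 w h0 g \<otimes>\<^bsub>G1\<^esub> F = c"
      using shift[OF h0P uP uZ] Qu unfolding F_def Q_def by simp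
    ultimately have "eval_word G1 w x g = eval_word G1 w h0 g"
      using Fc xc h0e G1.right_cancel by metis
    then show False using x(1) h0c unfolding X_def by auto
  qed
qed

end
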